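(* There are no fixed points in $\mathcal{M}_k$ under the action of a phase $P(\omega)$, where $\omega\in(-\pi,\pi)\setminus\{0\}$.
   Context: Monad matrices are $(A,B,C,D)$ with $A,B\in Mat_{k\times k}(\mathbb{C})$, $C\in Mat_{k\times 2}(\mathbb{C})$, $D\in Mat_{2\times k}(\mathbb{C})$, satisfying $[A,B]+CD=0$ and the full-rank conditions that $\begin{pmatrix}A-y\mathbb{1}_k\\ B-x\mathbb{1}_k\\ D\end{pmatrix}$ is injective and $\begin{pmatrix}x\mathbb{1}_k-B & A-y\mathbb{1}_k & C\end{pmatrix}$ is surjective for all $x,y\in\mathbb{C}$. $\mathcal{M}_k$ is the moduli space of non-singular monad matrices (those with $A\in GL(k,\mathbb{C})$) modulo $(A,B,C,D)\sim(gAg^{-1},gBg^{-1},gC,Dg^{-1})$, $g\in GL(k,\mathbb{C})$; it is identified with the moduli space of $(k,k)$-calorons. The phase $P(\omega)$ acts by $(A,B,C,D)\mapsto(A,B,Cq_\omega^{-1},q_\omega D)$ with $q_\omega=\mathrm{diag}(e^{-\imath\omega},e^{\imath\omega})$. *)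

theory Defs
  imports "HOL-Analysis.Analysis"
begin

text \<open>Monad matrices (A,B,C,D): A,B are k x k, C is k x 2, D is 2 x k.
  The size k is the cardinality of the finite index type 'k.\<close>

definition monad_matrices ::
  "complex^'k^'k \<Rightarrow> complex^'k^'k \<Rightarrow> complex^2^'k \<Rightarrow> complex^'k^2 \<Rightarrow> bool" where
  "monad_matrices A B C D =
     ((A ** B - B ** A) + C ** D = 0 \<and>
     (\<forall>x y :: complex.
        \<comment> \<open>injectivity of the stacked matrix (A - y I; B - x I; D)\<close>
        (\<forall>v :: complex^'k. (A - mat y) *v v = 0 \<and> (B - mat x) *v v = 0
              \<and> D *v v = 0 \<longrightarrow> v = 0) \<and>
        \<comment> \<open>surjectivity of the block matrix (x I - B, A - y I, C)\<close>
        (\<forall>w :: complex^'k. \<exists>u1 u2 :: complex^'k. \<exists>u3 :: complex^2.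
              (mat x - B) *v u1 + (A - mat y) *v u2 + C *v u3 = w)))"

definition nonsingular_monad ::
  "complex^'k^'k \<Rightarrow> complex^'k^'k \<Rightarrow> complex^2^'k \<Rightarrow> complex^'k^2 \<Rightarrow> bool" where
  "nonsingular_monad A B C D = (monad_matrices A B C D \<and> invertible A)"

text \<open>The GL(k) action: (A,B,C,D) ~ (gAg^-1, gBg^-1, gC, Dg^-1).
  monad_equiv A B C D A' B' C' D' says the two quadruples lie in the same orbit.\<close>
definition monad_equiv ::
  "complex^'k^'k \<Rightarrow> complex^'k^'k \<Rightarrow> complex^2^'k \<Rightarrow> complex^'k^2 \<Rightarrow>
   complex^'k^'k \<Rightarrow> complex^'k^'k \<Rightarrow> complex^2^'k \<Rightarrow> complex^'k^2 \<Rightarrow> bool" where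
  "monad_equiv A B C D A' B' C' D' =
     (\<exists>g :: complex^'k^'k. invertible g \<and>
        A' = g ** A ** matrix_inv g \<and> B' = g ** B ** matrix_inv g \<and>
        C' = g ** C \<and> D' = D ** matrix_inv g)"

text \<open>q_omega = diag(exp(-i omega), exp(i omega)).\<close>
definition q_phase :: "real \<Rightarrow> complex^2^2" where
  "q_phase \<omega> = (\<chi> i j. if i = j then (if i = 1 then exp (- \<i> * of_real \<omega>) else exp (\<i> * of_real \<omega>)) else 0)"

text \<open>P(omega): (A,B,C,D) |-> (A, B, C q^-1, q D), given componentwise on C and D.\<close>
definition phase_C :: "real \<Rightarrow> complex^2^'k \<Rightarrow> complex^2^'k" where
  "phase_C \<omega> C = C ** matrix_inv (q_phase \<omega>)"

definition phase_D :: "real \<Rightarrow> complex^'k^2 \<Rightarrow> complex^'k^2" where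
  "phase_D \<omega> D = q_phase \<omega> ** D"

end

theory Submission
  imports Defs "HOL-Computational_Algebra.Fundamental_Theorem_Algebra"
begin



definition ev :: "complex^'k^'k \<Rightarrow> complex poly \<Rightarrow> complex^'k \<Rightarrow> complex^'k" where
  "ev M p = fold_coeffs (\<lambda>a g v. a *s v + M *v g v) p (\<lambda>v. 0)"

lemma ev_0 [simp]: "ev M 0 v = 0"
  by (simp add: ev_def)

lemma ev_pCons [simp]: "ev M (pCons a p) v = a *s v + M *v ev M p v"
  by (cases "p = 0 \<and> a = 0") (auto simp add: ev_def)

lemma ev_add: "ev M (p + q) v = ev M p v + ev M q v"
proof (induction p arbitrary: q)
  case (pCons a p)
  then show ?case by (cases q) (simp add: matrix_vector_right_distrib vector_sadd_rdistrib algebra_simps)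
qed simp

lemma ev_smult: "ev M (smult c p) v = c *s ev M p v"
  by (induction p) (auto simp: vector_scalar_commute vector_sadd_rdistrib vector_add_ldistrib
     vector_smult_assoc)

lemma ev_minus: "ev M (p - q) v = ev M p v - ev M q v"
proof -
  have "ev M (p - q) v + ev M q v = ev M p v" using ev_add[of M "p - q" q v] by simp
  then show ?thesis by (simp add: algebra_simps)
qed

lemma ev_lin_add: "ev M p (u + w) = ev M p u + ev M p w"
  by (induction p) (auto simp: matrix_vector_right_distrib vector_add_ldistrib algebra_simps)

lemma ev_lin_smult: "ev M p (c *s u) = c *s ev M p u"
  by (induction p) (auto simp: vector_scalar_commute vector_add_ldistrib vector_smult_assoc mult.commute)

lemma ev_lin_zero: "ev M p 0 = 0"
  by (induction p) auto

lemma ev_mult: "ev M (p * q) v = ev M p (ev M q v)"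
proof (induction p arbitrary: v)
  case (pCons a p)
  then show ?case by (simp add: mult_pCons_left ev_add ev_smult)
qed simp

lemma ev_lin_factor: "ev M [:-a, 1:] u = M *v u - a *s u"
  by (simp add: algebra_simps)

lemma ev_monom: "ev M (monom c i) v = c *s (((*v) M) ^^ i) v"
proof (induction i)
  case 0 then show ?case by (simp add: monom_0)
next
  case (Suc i) then show ?case by (simp add: monom_Suc vector_scalar_commute)
qed

definition invar :: "complex^'k^'k \<Rightarrow> (complex^'k) set \<Rightarrow> bool" where
  "invar M S = (\<forall>x\<in>S. M *v x \<in> S)"

lemma ev_in: "vec.subspace S \<Longrightarrow> invar M S \<Longrightarrow> v \<in> S \<Longrightarrow> ev M p v \<in> S"
  by (induction p) (auto simp: invar_def vec.subspace_add vec.subspace_scale vec.subspace_0)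

lemma eig_poly:
  assumes S: "vec.subspace S" "invar M S"
  shows "v \<in> S \<Longrightarrow> v \<noteq> 0 \<Longrightarrow> p \<noteq> 0 \<Longrightarrow> ev M p v = 0 \<Longrightarrow> \<exists>w\<in>S. w \<noteq> 0 \<and> (\<exists>a. M *v w = a *s w)"
proof (induction "degree p" arbitrary: p rule: less_induct)
  case less
  show ?case
  proof (cases "degree p = 0")
    case True
    then obtain c where "p = [:c:]" by (metis degree_eq_zeroE)
    with less show ?thesis by (auto simp: vector_mul_eq_0)
  next
    case False
    then have "\<not> constant (poly p)" by (simp add: constant_degree)
    then obtain a where "poly p a = 0" using fundamental_theorem_of_algebra by blast
    then obtain q where pq: "p = [:-a, 1:] * q" using poly_eq_0_iff_dvd by (metis dvdE)
    have q0: "q \<noteq> 0" using less(4) pq by auto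
    have "degree p = degree [:-a,1:] + degree q" using pq q0
      by (metis degree_mult_eq pCons_eq_0_iff one_neq_zero)
    then have dq: "degree q < degree p" by simp
    let ?u = "ev M q v"
    have u: "?u \<in> S" using ev_in S less(2) by blast
    have "M *v ?u - a *s ?u = 0" 
      unfolding ev_lin_factor[symmetric] ev_mult[symmetric] pq[symmetric] by (rule less(5))
    then have eq: "M *v ?u = a *s ?u" by simp
    show ?thesis
    proof (cases "?u = 0")
      case True
      then show ?thesis using less(1)[OF dq] less(2,3) q0 by blast
    next
      case False
      then show ?thesis using u eq by blast
    qed
  qed
qed



lemma dep_poly: "\<exists>p. p \<noteq> 0 \<and> ev M p (v::complex^'k) = 0"
proof -
  let ?f = "\<lambda>i. (((*v) M) ^^ i) v"
  define n where "n = CARD('k)"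
  show ?thesis
  proof (cases "inj_on ?f {..n}")
    case False
    then obtain i j where ij: "i \<le> n" "j \<le> n" "i \<noteq> j" "?f i = ?f j"
      unfolding inj_on_def by auto
    let ?p = "monom 1 i - monom (1::complex) j"
    have "coeff ?p i = 1" using ij by (simp add: coeff_monom)
    then have "?p \<noteq> 0" by (metis coeff_0 zero_neq_one)
    moreover have "ev M ?p v = 0" using ij by (simp add: ev_minus ev_monom)
    ultimately show ?thesis by blast
  next
    case True
    let ?T = "?f ` {..n}"
    have cT: "card ?T = Suc n" using True by (simp add: card_image)
    have "vec.dim ?T \<le> vec.dim (UNIV :: (complex^'k) set)" by (rule vec.dim_subset) simp
    also have "\<dots> = n" by (simp add: n_def vec.dim_UNIV card_cart_basis)
    finally have "vec.dependent ?T" using cT by (intro vec.dependent_biggerset_general) simp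
    then obtain t u where tu: "finite t" "t \<subseteq> ?T" "(\<Sum>w\<in>t. u w *s w) = 0" "\<exists>w\<in>t. u w \<noteq> 0"
      unfolding vec.dependent_explicit by blast
    define a where "a i = (if ?f i \<in> t then u (?f i) else 0)" for i
    let ?p = "\<Sum>i\<le>n. monom (a i) i"
    have "ev M ?p v = (\<Sum>i\<le>n. a i *s ?f i)"
    proof -
      have "ev M (\<Sum>i\<in>I. monom (a i) i) v = (\<Sum>i\<in>I. a i *s ?f i)" if "finite I" for I
        using that by (induction I rule: finite_induct) (auto simp: ev_add ev_monom)
      then show ?thesis by blast
    qed
    also have "\<dots> = (\<Sum>w\<in>?T. (if w \<in> t then u w else 0) *s w)"
      using True by (simp add: sum.reindex a_def)
    also have "\<dots> = (\<Sum>w\<in>t. u w *s w)"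
      by (rule sum.mono_neutral_cong_right) (use tu in auto)
    finally have e0: "ev M ?p v = 0" using tu by simp
    from tu obtain w where w: "w \<in> t" "u w \<noteq> 0" by blast
    then obtain j where j: "j \<le> n" "w = ?f j" using tu by auto
    have "coeff ?p j = (\<Sum>i\<le>n. if j = i then a i else 0)" by (simp add: coeff_sum coeff_monom)
    also have "\<dots> = a j" using j by simp
    also have "\<dots> \<noteq> 0" using w j by (simp add: a_def)
    finally have "?p \<noteq> 0" by auto
    with e0 show ?thesis by blast
  qed
qed

lemma eig_exists:
  assumes "vec.subspace S" "invar M S" "v \<in> S" "v \<noteq> 0"
  shows "\<exists>w\<in>S. w \<noteq> 0 \<and> (\<exists>a. M *v w = a *s w)"
  using dep_poly[of M v] eig_poly[OF assms(1,2,3,4)] by blast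

lemma common_eig:
  assumes S: "vec.subspace S" "invar A S" "invar B S" "v \<in> S" "v \<noteq> 0"
    and comm: "\<forall>x\<in>S. A *v (B *v x) = B *v (A *v x)"
  shows "\<exists>w\<in>S. w \<noteq> 0 \<and> (\<exists>a. A *v w = a *s w) \<and> (\<exists>b. B *v w = b *s w)"
proof -
  obtain w a where w: "w \<in> S" "w \<noteq> 0" "A *v w = a *s w" using eig_exists[OF S(1,2,4,5)] by blast
  let ?E = "{x\<in>S. A *v x = a *s x}"
  have sE: "vec.subspace ?E"
    using S(1) unfolding vec.subspace_def
    by (auto simp: matrix_vector_right_distrib vector_scalar_commute vector_add_ldistrib vector_smult_assoc mult.commute)
  have iE: "invar B ?E"
    using S(3) comm unfolding invar_def by (auto simp: vector_scalar_commute)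
  obtain z b where z: "z \<in> ?E" "z \<noteq> 0" "B *v z = b *s z" using eig_exists[OF sE iE, of w] w by blast
  then show ?thesis by blast
qed

lemma surj_imp_inj_on:
  assumes S: "vec.subspace S" and im: "(*v) M ` S = S"
  shows "inj_on ((*v) M) S"
proof -
  obtain B where B: "B \<subseteq> S" "vec.independent B" "S \<subseteq> vec.span B" "card B = vec.dim S"
    using vec.basis_exists[of S] by blast
  have fB: "finite B" using B(2) vec.finiteI_independent by blast
  have spB: "vec.span B = S" using B S by (metis vec.span_mono vec.span_eq_iff subset_antisym)
  have "vec.span ((*v) M ` B) = S" using im spB by (simp add: vec.span_image)
  then have le: "vec.dim S \<le> card ((*v) M ` B)"
    using fB B(1) im by (metis finite_imageI vec.dim_le_card image_mono order_refl)
  have ge: "card ((*v) M ` B) \<le> card B" using fB card_image_le by blast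
  have cB: "card ((*v) M ` B) = card B" using le ge B(4) by simp
  have indep: "vec.independent ((*v) M ` B)"
    using vec.card_le_dim_spanning[of "(*v) M ` B" S] cB B(4) fB B(1) im \<open>vec.span ((*v) M ` B) = S\<close>
    by auto
  have "inj_on ((*v) M) B" using cB fB by (simp add: eq_card_imp_inj_on)
  then have "inj_on ((*v) M) (vec.span B)" using vec.inj_on_span_iff_independent_image[OF indep] by simp
  then show ?thesis using spB by simp
qed



lemma mat_vec: "mat a *v x = a *s (x::complex^'k)"
proof -
  have "(\<Sum>j\<in>UNIV. (if i = j then a else 0) * x $ j) = a * x $ i" for i
    by (simp add: if_distrib[of "\<lambda>t. t * _"] cong: if_cong)
  then show ?thesis by (simp add: vec_eq_iff matrix_vector_mult_def mat_def)
qed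

definition gen :: "complex^'k^'k \<Rightarrow> complex^'k^'k \<Rightarrow> complex^'k \<Rightarrow> (complex^'k) set" where
  "gen A B c = \<Inter>{T. vec.subspace T \<and> c \<in> T \<and> invar A T \<and> invar B T}"

lemma gen_subspace: "vec.subspace (gen A B c)"
  unfolding gen_def vec.subspace_def by auto

lemma gen_invar: "invar A (gen A B c)" "invar B (gen A B c)"
  unfolding gen_def invar_def by auto

lemma gen_c: "c \<in> gen A B c"
  unfolding gen_def by auto

lemma gen_min: "vec.subspace T \<Longrightarrow> c \<in> T \<Longrightarrow> invar A T \<Longrightarrow> invar B T \<Longrightarrow> gen A B c \<subseteq> T"
  unfolding gen_def by auto

lemma rank1:
  fixes A B :: "complex^'k^'k" and c :: "complex^'k" and \<delta> :: "complex^'k \<Rightarrow> complex"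
  assumes c: "c \<noteq> 0"
    and comm: "\<forall>v\<in>gen A B c. A *v (B *v v) - B *v (A *v v) = - (\<delta> v) *s c"
    and inj: "\<forall>v\<in>gen A B c. \<forall>x y. A *v v = y *s v \<and> B *v v = x *s v \<and> \<delta> v = 0 \<longrightarrow> v = 0"
    and d0: "\<delta> 0 = 0"
  shows False
proof -
  let ?S = "gen A B c"
  have sS: "vec.subspace ?S" and iA: "invar A ?S" and iB: "invar B ?S" and cS: "c \<in> ?S"
    using gen_subspace gen_invar gen_c by blast+
  obtain w1 y where w1: "w1 \<in> ?S" "w1 \<noteq> 0" "A *v w1 = y *s w1"
    using eig_exists[OF sS iA cS c] by blast
  let ?E = "{x\<in>?S. A *v x = y *s x}"
  show False
  proof (cases "\<forall>w\<in>?E. \<delta> w = 0")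
    case True
    have sE: "vec.subspace ?E"
      using sS unfolding vec.subspace_def
      by (auto simp: matrix_vector_right_distrib vector_scalar_commute vector_add_ldistrib vector_smult_assoc mult.commute)
    have iE: "invar B ?E"
      unfolding invar_def
    proof
      fix x assume x: "x \<in> ?E"
      have "B *v x \<in> ?S" using x iB by (auto simp: invar_def)
      moreover have "A *v (B *v x) = y *s (B *v x)"
        using comm x True by (auto simp: vector_scalar_commute)
      ultimately show "B *v x \<in> ?E" by blast
    qed
    obtain z x where z: "z \<in> ?E" "z \<noteq> 0" "B *v z = x *s z"
      using eig_exists[OF sE iE, of w1] w1 by blast
    then show False using inj True by blast
  next
    case False
    then obtain w where w: "w \<in> ?S" "A *v w = y *s w" "\<delta> w \<noteq> 0" by blast
    let ?N = "A - mat y"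
    have N: "?N *v x = A *v x - y *s x" for x by (simp add: matrix_vector_mult_diff_rdistrib mat_vec)
    let ?R = "(*v) ?N ` ?S"
    have sR: "vec.subspace ?R" using sS vec.subspace_image by blast
    have RS: "?R \<subseteq> ?S" using sS iA unfolding N invar_def
      by (auto intro!: vec.subspace_diff vec.subspace_scale)
    have Bw: "B *v w \<in> ?S" using w iB by (auto simp: invar_def)
    have "?N *v (B *v w) = - (\<delta> w) *s c"
      using comm w unfolding N by (auto simp: vector_scalar_commute algebra_simps)
    then have "?N *v ((- inverse (\<delta> w)) *s (B *v w)) = (- inverse (\<delta> w)) *s (- (\<delta> w) *s c)"
      by (metis vector_scalar_commute)
    also have "\<dots> = c" using w(3) by (simp add: vec_eq_iff)
    finally have "?N *v ((- inverse (\<delta> w)) *s (B *v w)) = c" .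
    moreover have "(- inverse (\<delta> w)) *s (B *v w) \<in> ?S" using Bw sS vec.subspace_scale by blast
    ultimately have cR: "c \<in> ?R" by (metis image_eqI)
    have iAR: "invar A ?R" unfolding invar_def
    proof
      fix z assume "z \<in> ?R"
      then obtain u where u: "u \<in> ?S" "z = ?N *v u" by blast
      have "A *v z = ?N *v (A *v u)" using u unfolding N
        by (simp add: matrix_vector_mult_diff_distrib vector_scalar_commute)
      moreover have "A *v u \<in> ?S" using u iA by (auto simp: invar_def)
      ultimately show "A *v z \<in> ?R" by blast
    qed
    have iBR: "invar B ?R" unfolding invar_def
    proof
      fix z assume "z \<in> ?R"
      then obtain u where u: "u \<in> ?S" "z = ?N *v u" by blast
      have e1: "B *v z = B *v (A *v u) - y *s (B *v u)" using u unfolding N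
        by (simp add: matrix_vector_mult_diff_distrib vector_scalar_commute)
      have "A *v (B *v u) - B *v (A *v u) = - (\<delta> u) *s c" using u comm by blast
      then have e2: "B *v (A *v u) = A *v (B *v u) + \<delta> u *s c"
        by (simp add: algebra_simps eq_diff_eq)
      have "B *v z = ?N *v (B *v u) + \<delta> u *s c" unfolding N e1 e2 by (simp add: algebra_simps)
      moreover have "?N *v (B *v u) \<in> ?R" using u iB by (auto simp: invar_def)
      moreover have "\<delta> u *s c \<in> ?R" using cR sR vec.subspace_scale by blast
      ultimately show "B *v z \<in> ?R" using sR vec.subspace_add by metis
    qed
    have "?S \<subseteq> ?R" using gen_min[OF sR cR iAR iBR] .
    then have "?R = ?S" using RS by blast
    then have "inj_on ((*v) ?N) ?S" using surj_imp_inj_on[OF sS] by blast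
    moreover have "?N *v w = ?N *v 0" using w unfolding N by simp
    moreover have "0 \<in> ?S" using sS vec.subspace_0 by blast
    moreover have "w \<noteq> 0" using w(3) d0 by auto
    ultimately show False using w(1) by (meson inj_onD)
  qed
qed



definition col :: "complex^2^'k \<Rightarrow> 2 \<Rightarrow> complex^'k" where
  "col C h = (\<chi> i. C $ i $ h)"

lemma UNIV_2_pair: "(h::2) \<noteq> h' \<Longrightarrow> UNIV = {h, h'}"
  using exhaust_2 by (metis (full_types) UNIV_eq_I insert_iff)

lemma C_decomp:
  assumes "(h::2) \<noteq> h'"
  shows "C *v x = x $ h *s col C h + x $ h' *s col C h'"
proof -
  have "(C *v x) $ i = (\<Sum>j\<in>{h,h'}. C $ i $ j * x $ j)" for i
    by (simp add: matrix_vector_mult_def UNIV_2_pair[OF assms, symmetric])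
  then show ?thesis using assms by (simp add: vec_eq_iff col_def mult.commute)
qed

lemma col_zero:
  fixes A B g :: "complex^'k^'k" and C :: "complex^2^'k" and D :: "complex^'k^2"
  assumes hh: "h \<noteq> h'" and ab: "\<alpha> \<noteq> \<beta>"
    and comm0: "\<forall>v. A *v (B *v v) - B *v (A *v v) = - (C *v (D *v v))"
    and inj0: "\<forall>v x y. A *v v = y *s v \<and> B *v v = x *s v \<and> D *v v = 0 \<longrightarrow> v = 0"
    and gA: "\<forall>v. g *v (A *v v) = A *v (g *v v)" and gB: "\<forall>v. g *v (B *v v) = B *v (g *v v)"
    and gc: "g *v col C h = \<alpha> *s col C h"
    and gD: "\<forall>v. (D *v (g *v v)) $ h' = \<beta> * (D *v v) $ h'"
  shows "col C h = 0"
proof (rule ccontr)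
  assume c: "col C h \<noteq> 0"
  let ?c = "col C h"
  let ?S = "gen A B ?c"
  let ?E = "{v. g *v v = \<alpha> *s v}"
  have sE: "vec.subspace ?E" unfolding vec.subspace_def
    by (auto simp: matrix_vector_right_distrib vector_scalar_commute vector_add_ldistrib vector_smult_assoc mult.commute)
  have "?S \<subseteq> ?E"
    by (rule gen_min[OF sE]) (use gc gA gB in \<open>auto simp: invar_def vector_scalar_commute\<close>)
  then have Dh': "(D *v v) $ h' = 0" if "v \<in> ?S" for v
  proof -
    have "g *v v = \<alpha> *s v" using that \<open>?S \<subseteq> ?E\<close> by blast
    then have "(D *v (g *v v)) $ h' = \<alpha> * (D *v v) $ h'" by (simp add: vector_scalar_commute)
    then have "\<alpha> * (D *v v) $ h' = \<beta> * (D *v v) $ h'" using gD by metis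
    then show ?thesis using ab by simp
  qed
  show False
  proof (rule rank1[OF c, where \<delta>="\<lambda>v. (D *v v) $ h"])
    show "\<forall>v\<in>?S. A *v (B *v v) - B *v (A *v v) = - ((D *v v) $ h) *s ?c"
    proof
      fix v assume v: "v \<in> ?S"
      have "C *v (D *v v) = (D *v v) $ h *s ?c"
        using C_decomp[OF hh, of C "D *v v"] Dh'[OF v] by simp
      then show "A *v (B *v v) - B *v (A *v v) = - ((D *v v) $ h) *s ?c" using comm0 by simp
    qed
    show "\<forall>v\<in>?S. \<forall>x y. A *v v = y *s v \<and> B *v v = x *s v \<and> (D *v v) $ h = 0 \<longrightarrow> v = 0"
    proof (intro ballI allI impI)
      fix v x y assume v: "v \<in> ?S" and h: "A *v v = y *s v \<and> B *v v = x *s v \<and> (D *v v) $ h = 0"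
      have "(D *v v) $ i = 0" for i
      proof -
        have "i \<in> {h, h'}" using UNIV_2_pair[OF hh] by blast
        then show ?thesis using Dh'[OF v] h by auto
      qed
      then have "D *v v = 0" by (simp add: vec_eq_iff)
      then show "v = 0" using inj0 h by blast
    qed
    show "(D *v 0) $ h = 0" by simp
  qed
qed



definition pairing :: "complex^'k \<Rightarrow> complex^'k \<Rightarrow> complex" where
  "pairing \<phi> z = (\<Sum>i\<in>UNIV. \<phi> $ i * z $ i)"

lemma pairing_mat: "pairing \<phi> (M *v u) = pairing (transpose M *v \<phi>) u"
proof -
  have "pairing \<phi> (M *v u) = (\<Sum>i\<in>UNIV. \<Sum>j\<in>UNIV. \<phi> $ i * (M $ i $ j * u $ j))"
    unfolding pairing_def matrix_vector_mult_def by (simp add: sum_distrib_left)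
  also have "\<dots> = (\<Sum>j\<in>UNIV. \<Sum>i\<in>UNIV. \<phi> $ i * (M $ i $ j * u $ j))"
    by (rule sum.swap)
  also have "\<dots> = pairing (transpose M *v \<phi>) u"
    unfolding pairing_def matrix_vector_mult_def transpose_def
    by (simp add: sum_distrib_left mult_ac)
  finally show ?thesis .
qed

lemma pairing_add: "pairing \<phi> (u + w) = pairing \<phi> u + pairing \<phi> w"
  unfolding pairing_def by (simp add: distrib_left sum.distrib)

lemma pairing_smult: "pairing \<phi> (a *s u) = a * pairing \<phi> u"
  unfolding pairing_def by (simp add: sum_distrib_left mult_ac)

lemma pairing_smult_left: "pairing (a *s \<phi>) u = a * pairing \<phi> u"
  unfolding pairing_def by (simp add: sum_distrib_left mult_ac)

lemma pairing_diff: "pairing \<phi> (u - w) = pairing \<phi> u - pairing \<phi> w"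
  unfolding pairing_def by (simp add: algebra_simps sum_subtractf)

lemma pairing_self:
  assumes "\<phi> \<noteq> 0" shows "pairing \<phi> (\<chi> i. cnj (\<phi> $ i)) \<noteq> 0"
proof
  assume a: "pairing \<phi> (\<chi> i. cnj (\<phi> $ i)) = 0"
  have e: "\<phi> $ i * cnj (\<phi> $ i) = of_real ((cmod (\<phi> $ i))\<^sup>2)" for i
    by (rule complex_norm_square[symmetric])
  have "(\<Sum>i\<in>UNIV. complex_of_real ((cmod (\<phi> $ i))\<^sup>2)) = 0"
    using a unfolding pairing_def e[symmetric] by simp
  then have "(\<Sum>i\<in>UNIV. (cmod (\<phi> $ i))\<^sup>2) = 0"
    by (metis of_real_eq_0_iff of_real_sum)
  then have "\<forall>i\<in>UNIV. (cmod (\<phi> $ i))\<^sup>2 = 0"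
    by (subst sum_nonneg_eq_0_iff[symmetric]) auto
  then have "\<phi> = 0" by (simp add: vec_eq_iff)
  with assms show False by simp
qed

lemma no_commuting:
  fixes A B :: "complex^'k^'k" and C :: "complex^2^'k"
  assumes C0: "C = 0" and comm: "A ** B = B ** A"
    and surj: "\<forall>x y :: complex. \<forall>w :: complex^'k. \<exists>u1 u2 :: complex^'k. \<exists>u3 :: complex^2.
              (mat x - B) *v u1 + (A - mat y) *v u2 + C *v u3 = w"
  shows False
proof -
  let ?At = "transpose A" and ?Bt = "transpose B"
  obtain i0 :: 'k where True by blast
  have ax: "axis i0 (1::complex) \<noteq> 0" by (simp add: axis_eq_0_iff)
  have "\<forall>x\<in>UNIV. ?At *v (?Bt *v x) = ?Bt *v (?At *v x)"
    by (metis matrix_vector_mul_assoc matrix_transpose_mul comm)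
  then obtain \<phi> a b where \<phi>: "\<phi> \<noteq> 0" "?At *v \<phi> = a *s \<phi>" "?Bt *v \<phi> = b *s \<phi>"
    using common_eig[of UNIV ?At ?Bt "axis i0 1"] ax by (auto simp: invar_def vec.subspace_UNIV)
  obtain u1 u2 u3 where u: "(mat b - B) *v u1 + (A - mat a) *v u2 + C *v u3 = (\<chi> i. cnj (\<phi> $ i))"
    using surj by blast
  have "pairing \<phi> ((mat b - B) *v u1) = 0"
    unfolding matrix_vector_mult_diff_rdistrib mat_vec pairing_diff pairing_smult pairing_mat[of \<phi> B] \<phi>(3)
      pairing_smult_left by simp
  moreover have "pairing \<phi> ((A - mat a) *v u2) = 0"
    unfolding matrix_vector_mult_diff_rdistrib mat_vec pairing_diff pairing_smult pairing_mat[of \<phi> A] \<phi>(2)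
      pairing_smult_left by simp
  moreover have "pairing \<phi> (C *v u3) = 0" using C0 by (simp add: pairing_def)
  ultimately have "pairing \<phi> (\<chi> i. cnj (\<phi> $ i)) = 0" unfolding u[symmetric] by (simp add: pairing_add)
  with pairing_self[OF \<phi>(1)] show False by simp
qed



lemma mu_ne_nu:
  fixes \<omega> :: real
  assumes "-pi < \<omega>" "\<omega> < pi" "\<omega> \<noteq> 0"
  shows "exp (\<i> * of_real \<omega>) \<noteq> exp (- \<i> * of_real \<omega>)"
proof
  assume "exp (\<i> * of_real \<omega>) = exp (- \<i> * of_real \<omega>)"
  then have "Im (exp (\<i> * of_real \<omega>)) = Im (exp (- \<i> * of_real \<omega>))" by simp
  then have "sin \<omega> = - sin \<omega>" by (simp add: Im_exp)
  then have "sin \<omega> = 0" by simp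
  then show False using assms sin_eq_0_pi by blast
qed

theorem mainTheorem3:
  fixes \<omega> :: real
    and A B :: "complex^'k::finite^'k" and C :: "complex^2^'k" and D :: "complex^'k^2"
  assumes "-pi < \<omega>" and "\<omega> < pi" and "\<omega> \<noteq> 0"
    and "nonsingular_monad A B C D"
  shows "\<not> monad_equiv A B C D A B (phase_C \<omega> C) (phase_D \<omega> D)"
proof
  assume "monad_equiv A B C D A B (phase_C \<omega> C) (phase_D \<omega> D)"
  then obtain g where g: "invertible g" "A = g ** A ** matrix_inv g" "B = g ** B ** matrix_inv g"
    "phase_C \<omega> C = g ** C" "phase_D \<omega> D = D ** matrix_inv g"
    unfolding monad_equiv_def by blast
  have mm: "monad_matrices A B C D" using assms(4) unfolding nonsingular_monad_def by blast
  have eq0: "(A ** B - B ** A) + C ** D = 0"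
    and injM: "\<And>x y v. (A - mat y) *v v = 0 \<and> (B - mat x) *v v = 0 \<and> D *v v = 0 \<Longrightarrow> v = 0"
    and surjM: "\<forall>x y :: complex. \<forall>w :: complex^'k. \<exists>u1 u2 :: complex^'k. \<exists>u3 :: complex^2.
              (mat x - B) *v u1 + (A - mat y) *v u2 + C *v u3 = w"
    using mm unfolding monad_matrices_def by blast+
  let ?G = "matrix_inv g"
  have gG: "g ** ?G = mat 1 \<and> ?G ** g = mat 1"
    using g(1) unfolding invertible_def matrix_inv_def by (rule someI_ex)
  have Ag: "A ** g = g ** A"
  proof -
    have "A ** g = g ** A ** (?G ** g)" using g(2) by (metis matrix_mul_assoc)
    then show ?thesis using gG by (simp add: matrix_mul_rid)
  qed
  have Bg: "B ** g = g ** B"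
  proof -
    have "B ** g = g ** B ** (?G ** g)" using g(3) by (metis matrix_mul_assoc)
    then show ?thesis using gG by (simp add: matrix_mul_rid)
  qed
  have gA: "\<forall>v. g *v (A *v v) = A *v (g *v v)" using Ag by (simp add: matrix_vector_mul_assoc)
  have gB: "\<forall>v. g *v (B *v v) = B *v (g *v v)" using Bg by (simp add: matrix_vector_mul_assoc)
  define \<mu> where "\<mu> = exp (\<i> * of_real \<omega>)"
  define \<nu> where "\<nu> = exp (- \<i> * of_real \<omega>)"
  have mn: "\<mu> * \<nu> = 1" "\<nu> * \<mu> = 1" unfolding \<mu>_def \<nu>_def by (simp_all add: exp_add[symmetric])
  have munu: "\<mu> \<noteq> \<nu>" unfolding \<mu>_def \<nu>_def using mu_ne_nu assms(1-3) by blast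
  define qi :: "complex^2^2" where "qi = (\<chi> i j. if i = j then (if i = 1 then \<mu> else \<nu>) else 0)"
  have qqi: "q_phase \<omega> ** qi = mat 1" "qi ** q_phase \<omega> = mat 1"
    unfolding q_phase_def qi_def \<nu>_def[symmetric] \<mu>_def[symmetric] using mn
    by (auto simp: vec_eq_iff matrix_matrix_mult_def mat_def sum_2 forall_2)
  have qinv: "matrix_inv (q_phase \<omega>) = qi"
    unfolding matrix_inv_def
  proof (rule some_equality)
    show "q_phase \<omega> ** qi = mat 1 \<and> qi ** q_phase \<omega> = mat 1" using qqi by blast
    fix X assume X: "q_phase \<omega> ** X = mat 1 \<and> X ** q_phase \<omega> = mat 1"
    have "X = X ** (q_phase \<omega> ** qi)" using qqi by (simp add: matrix_mul_rid)
    also have "\<dots> = (X ** q_phase \<omega>) ** qi" by (simp add: matrix_mul_assoc)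
    also have "\<dots> = qi" using X by (simp add: matrix_mul_lid)
    finally show "X = qi" .
  qed
  have Cq: "C ** qi = g ** C" using g(4) unfolding phase_C_def qinv .
  have Dq: "D ** g = qi ** D"
  proof -
    have "q_phase \<omega> ** D = D ** ?G" using g(5) unfolding phase_D_def .
    then have "qi ** (q_phase \<omega> ** D) ** g = qi ** (D ** ?G) ** g" by simp
    moreover have "qi ** (q_phase \<omega> ** D) ** g = D ** g"
      by (simp only: matrix_mul_assoc qqi(2) matrix_mul_lid)
    moreover have "qi ** (D ** ?G) ** g = qi ** D"
      using gG by (simp only: matrix_mul_assoc[symmetric] matrix_mul_rid)
    ultimately show ?thesis by simp
  qed
  have gc1: "g *v col C 1 = \<mu> *s col C 1"
  proof -
    have "(g *v col C 1) $ i = (C ** qi) $ i $ 1" for i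
      using Cq by (simp add: matrix_vector_mult_def matrix_matrix_mult_def col_def)
    then show ?thesis by (simp add: vec_eq_iff matrix_matrix_mult_def sum_2 qi_def col_def mult.commute)
  qed
  have gc2: "g *v col C 2 = \<nu> *s col C 2"
  proof -
    have "(g *v col C 2) $ i = (C ** qi) $ i $ 2" for i
      using Cq by (simp add: matrix_vector_mult_def matrix_matrix_mult_def col_def)
    then show ?thesis by (simp add: vec_eq_iff matrix_matrix_mult_def sum_2 qi_def col_def mult.commute)
  qed
  have gDv: "D *v (g *v v) = qi *v (D *v v)" for v
    by (simp add: matrix_vector_mul_assoc Dq)
  have gD1: "\<forall>v. (D *v (g *v v)) $ 1 = \<mu> * (D *v v) $ 1"
    unfolding gDv by (simp add: matrix_vector_mult_def sum_2 qi_def)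
  have gD2: "\<forall>v. (D *v (g *v v)) $ 2 = \<nu> * (D *v v) $ 2"
    unfolding gDv by (simp add: matrix_vector_mult_def sum_2 qi_def)
  have ABC: "A ** B - B ** A = - (C ** D)" using eq0 by (simp add: eq_neg_iff_add_eq_0)
  have neg: "(- M) *v v = - (M *v v)" for M :: "complex^'k^'k" and v
    by (simp add: vec_eq_iff matrix_vector_mult_def sum_negf)
  have comm0: "\<forall>v. A *v (B *v v) - B *v (A *v v) = - (C *v (D *v v))"
  proof
    fix v
    have "(A ** B - B ** A) *v v = - (C ** D) *v v" using ABC by simp
    then show "A *v (B *v v) - B *v (A *v v) = - (C *v (D *v v))"
      by (simp add: matrix_vector_mult_diff_rdistrib matrix_vector_mul_assoc neg)
  qed
  have inj0: "\<forall>v x y. A *v v = y *s v \<and> B *v v = x *s v \<and> D *v v = 0 \<longrightarrow> v = 0"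
  proof (intro allI impI)
    fix v x y assume h: "A *v v = y *s v \<and> B *v v = x *s v \<and> D *v v = 0"
    have "(A - mat y) *v v = 0" using h by (simp add: matrix_vector_mult_diff_rdistrib mat_vec)
    moreover have "(B - mat x) *v v = 0" using h by (simp add: matrix_vector_mult_diff_rdistrib mat_vec)
    ultimately show "v = 0" using injM h by blast
  qed
  have c1: "col C 1 = 0"
    by (rule col_zero[where h'=2 and \<beta>=\<nu>, OF _ munu comm0 inj0 gA gB gc1 gD2]) simp
  have c2: "col C 2 = 0"
    by (rule col_zero[where h'=1 and \<beta>=\<mu>, OF _ munu[symmetric] comm0 inj0 gA gB gc2 gD1]) simp
  have C0: "C = 0"
  proof -
    have "C $ i $ j = 0" for i j
      using c1 c2 exhaust_2[of j] unfolding col_def vec_eq_iff by auto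
    then show ?thesis by (simp add: vec_eq_iff)
  qed
  have "A ** B = B ** A" using ABC C0 by simp
  then show False using no_commuting[OF C0 _ surjM] by blast
qed

end
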